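(* Let $(A,\diamond,\circ,\lambda)$ be a left semi-truss such that $(A,\circ)$ is a group and $(A,\diamond)$ is a left cancellative semigroup with an idempotent $e$. Define $\sigma:A\to A$ by $\sigma(a)=a\circ e$. Then $\sigma$ is bijective, and with the binary operation $a\bullet b:=\sigma\big(\sigma^{-1}(a)\circ\sigma^{-1}(b)\big)$, the triple $(A,\diamond,\bullet)$ is a left semi-brace.
   Context: A left semi-truss $(A,\diamond,\circ,\lambda)$ is a set $A$ with two associative binary operations $\diamond,\circ$ and a function $\lambda:A\times A\to A$ such that $a\circ(b\diamond c)=(a\circ b)\diamond\lambda(a,c)$ for all $a,b,c\in A$. A semigroup $(A,\diamond)$ is left cancellative if $a\diamond b=a\diamond c$ implies $b=c$. A (left) semi-brace is a set $A$ with binary operations $\diamond,\bullet$ such that $(A,\diamond)$ is a left cancellative semigroup, $(A,\bullet)$ is a group, and $a\bullet(b\diamond c)=(a\bullet b)\diamond\big(a\bullet(a^\bullet\diamond c)\big)$ for all $a,b,c\in A$, where $a^\bullet$ is the inverse of $a$ in $(A,\bullet)$. *)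

theory Defs
  imports Main
begin

definition assoc_op :: "('a \<Rightarrow> 'a \<Rightarrow> 'a) \<Rightarrow> bool" where
  "assoc_op f \<longleftrightarrow> (\<forall>a b c. f (f a b) c = f a (f b c))"

definition left_semi_truss ::
  "('a \<Rightarrow> 'a \<Rightarrow> 'a) \<Rightarrow> ('a \<Rightarrow> 'a \<Rightarrow> 'a) \<Rightarrow> ('a \<Rightarrow> 'a \<Rightarrow> 'a) \<Rightarrow> bool" where
  "left_semi_truss dia circ lam \<longleftrightarrow> assoc_op dia \<and> assoc_op circ \<and>
     (\<forall>a b c. circ a (dia b c) = dia (circ a b) (lam a c))"

definition is_group :: "('a \<Rightarrow> 'a \<Rightarrow> 'a) \<Rightarrow> bool" where
  "is_group f \<longleftrightarrow> assoc_op f \<and>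
     (\<exists>u. (\<forall>a. f u a = a \<and> f a u = a) \<and> (\<forall>a. \<exists>b. f a b = u \<and> f b a = u))"

definition group_unit :: "('a \<Rightarrow> 'a \<Rightarrow> 'a) \<Rightarrow> 'a" where
  "group_unit f = (THE u. \<forall>a. f u a = a \<and> f a u = a)"

definition group_inv :: "('a \<Rightarrow> 'a \<Rightarrow> 'a) \<Rightarrow> 'a \<Rightarrow> 'a" where
  "group_inv f a = (THE b. f a b = group_unit f \<and> f b a = group_unit f)"

definition left_cancellative :: "('a \<Rightarrow> 'a \<Rightarrow> 'a) \<Rightarrow> bool" where
  "left_cancellative f \<longleftrightarrow> (\<forall>a b c. f a b = f a c \<longrightarrow> b = c)"

definition left_semi_brace :: "('a \<Rightarrow> 'a \<Rightarrow> 'a) \<Rightarrow> ('a \<Rightarrow> 'a \<Rightarrow> 'a) \<Rightarrow> bool" where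
  "left_semi_brace dia bul \<longleftrightarrow> assoc_op dia \<and> left_cancellative dia \<and> is_group bul \<and>
     (\<forall>a b c. bul a (dia b c) = dia (bul a b) (bul a (dia (group_inv bul a) c)))"

end

theory Submission
  imports Defs
begin

lemma grp_unit:
  assumes "is_group f"
  shows "\<forall>a. f (group_unit f) a = a \<and> f a (group_unit f) = a"
proof -
  from assms obtain u where u: "\<forall>a. f u a = a \<and> f a u = a" unfolding is_group_def by blast
  have "(THE u. \<forall>a. f u a = a \<and> f a u = a) = u"
    by (rule the_equality, rule u, metis u)
  then show ?thesis using u unfolding group_unit_def by simp
qed

lemma grp_inv:
  assumes "is_group f"
  shows "f a (group_inv f a) = group_unit f \<and> f (group_inv f a) a = group_unit f"
proof -
  have A: "assoc_op f" using assms unfolding is_group_def by blast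
  have U: "\<forall>a. f (group_unit f) a = a \<and> f a (group_unit f) = a" using grp_unit[OF assms] .
  from assms obtain u where u: "\<forall>a. f u a = a \<and> f a u = a" and
    iv: "\<forall>a. \<exists>b. f a b = u \<and> f b a = u" unfolding is_group_def by blast
  have uu: "u = group_unit f" by (metis U u)
  obtain b where b: "f a b = u \<and> f b a = u" using iv by blast
  have "(THE b. f a b = group_unit f \<and> f b a = group_unit f) = b"
  proof (rule the_equality)
    show "f a b = group_unit f \<and> f b a = group_unit f" using b uu by simp
  next
    fix c assume c: "f a c = group_unit f \<and> f c a = group_unit f"
    have "c = f c (f a b)" using b u by simp
    also have "\<dots> = f (f c a) b" using A unfolding assoc_op_def by simp
    also have "\<dots> = b" using c U by simp
    finally show "c = b" .
  qed
  then show ?thesis using b uu unfolding group_inv_def by simp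
qed

theorem proposition2p5:
  fixes dia circ :: "'a \<Rightarrow> 'a \<Rightarrow> 'a" and lam :: "'a \<Rightarrow> 'a \<Rightarrow> 'a" and e :: 'a
  assumes "left_semi_truss dia circ lam"
    and "is_group circ"
    and "assoc_op dia" and "left_cancellative dia"
    and "dia e e = e"
  defines "\<sigma> \<equiv> (\<lambda>a. circ a e)"
  shows "bij \<sigma> \<and>
    left_semi_brace dia (\<lambda>a b. \<sigma> (circ (inv \<sigma> a) (inv \<sigma> b)))"
proof -
  define one where "one = group_unit circ"
  define i where "i = group_inv circ"
  have CA: "\<And>a b c. circ (circ a b) c = circ a (circ b c)"
    using assms(2) unfolding is_group_def assoc_op_def by blast
  have DA: "\<And>a b c. dia (dia a b) c = dia a (dia b c)"
    using assms(3) unfolding assoc_op_def by blast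
  have LC: "\<And>a b c. dia a b = dia a c \<Longrightarrow> b = c"
    using assms(4) unfolding left_cancellative_def by blast
  have TR: "\<And>a b c. circ a (dia b c) = dia (circ a b) (lam a c)"
    using assms(1) unfolding left_semi_truss_def by blast
  have U1: "\<And>a. circ one a = a" "\<And>a. circ a one = a"
    using grp_unit[OF assms(2)] unfolding one_def by auto
  have I1: "\<And>a. circ a (i a) = one" "\<And>a. circ (i a) a = one"
    using grp_inv[OF assms(2)] unfolding one_def i_def by auto
  have eL: "\<And>y. dia e y = y"
  proof -
    fix y
    have "dia e (dia e y) = dia e y" using DA[of e e y] assms(5) by simp
    then show "dia e y = y" by (rule LC)
  qed
  have inj: "inj \<sigma>" unfolding inj_def \<sigma>_def
    by (metis CA I1(1) U1(2))
  have sur: "surj \<sigma>" unfolding surj_def \<sigma>_def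
    by (metis CA I1(2) U1(2))
  have bj: "bij \<sigma>" using inj sur by (simp add: bij_def)
  have iv: "\<And>a. inv \<sigma> a = circ a (i e)"
  proof -
    fix a
    have "\<sigma> (circ a (i e)) = a" unfolding \<sigma>_def by (simp add: CA I1 U1)
    then show "inv \<sigma> a = circ a (i e)" using inv_f_eq[OF inj] by metis
  qed
  define bul where "bul = (\<lambda>a b. \<sigma> (circ (inv \<sigma> a) (inv \<sigma> b)))"
  have B: "\<And>a b. bul a b = circ (circ a (i e)) b"
    unfolding bul_def by (simp only: iv, simp add: \<sigma>_def CA I1 U1)
  have bul_eq: "bul = (\<lambda>a b. circ (circ a (i e)) b)" using B by (intro ext) simp
  have BA: "assoc_op bul" unfolding assoc_op_def B by (simp add: CA)
  have Bunit: "\<forall>a. bul e a = a \<and> bul a e = a" unfolding B by (simp add: CA I1 U1)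
  have Binv: "\<And>a. bul a (circ e (circ (i a) e)) = e \<and> bul (circ e (circ (i a) e)) a = e"
    unfolding B by (metis CA I1 U1)
  have BG: "is_group bul" unfolding is_group_def
    using BA Bunit Binv by blast
  have gu: "group_unit bul = e" using grp_unit[OF BG] Bunit by metis
  have BR: "\<And>a b c. bul a (dia b c) = dia (bul a b) (bul a (dia (group_inv bul a) c))"
  proof -
    fix a b c
    define x where "x = circ a (i e)"
    have ai: "bul a (group_inv bul a) = e" using grp_inv[OF BG] gu by simp
    have "bul a (dia (group_inv bul a) c) = dia (bul a (group_inv bul a)) (lam x c)"
      unfolding B x_def[symmetric] by (rule TR)
    also have "\<dots> = lam x c" using ai eL by simp
    finally have r: "bul a (dia (group_inv bul a) c) = lam x c" .
    show "bul a (dia b c) = dia (bul a b) (bul a (dia (group_inv bul a) c))"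
      unfolding r unfolding B x_def[symmetric] by (rule TR)
  qed
  have "left_semi_brace dia bul" unfolding left_semi_brace_def
    using assms(3,4) BG BR by blast
  then show ?thesis using bj unfolding bul_def by simp
qed

end
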